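(* Let $W=\frac12(x^2-y^2)\partial_x+xy\partial_y$ on $\mathrm{SL}(2,\mathbb R)$. (1) The only $\mathcal N$-invariant $W$-translators are the surfaces $\Sigma_{\theta_0}$. (2) The only $\mathcal A$-invariant $W$-translators are the surfaces $\Sigma_{\theta_0}$. (3) Let $\Sigma$ be a rotational surface whose generating curve $\alpha(s)=(x(s),y(s))$ satisfies $x'=2y\cos\varphi$, $y'=2y\sin\varphi$. If $\Sigma$ is a $W$-translator, then $$\varphi'=(x-2)\cos\varphi-\frac{1}{2y}(x^2-y^2)\sin\varphi.$$
   Context: $\mathrm{SL}(2,\mathbb R)$ is given global coordinates $(x,y,\theta)\in\mathbb R\times(0,\infty)\times\mathbb R$ via $(x,y,\theta)\mapsto \begin{pmatrix}1&x\\0&1\end{pmatrix}\begin{pmatrix}\sqrt y&0\\0&1/\sqrt y\end{pmatrix}\begin{pmatrix}\cos\theta&\sin\theta\\-\sin\theta&\cos\theta\end{pmatrix}$, with the metric $\langle\,,\rangle=\frac{dx^2+dy^2}{4y^2}+\left(d\theta+\frac{dx}{2y}\right)^2$. Orthonormal frame: $e_1=2y\partial_x-\partial_\theta$, $e_2=2y\partial_y$, $e_3=\partial_\theta$; $W=\frac{1}{2y}\big(\frac12(x^2-y^2)e_1+xye_2+\frac12(x^2-y^2)e_3\big)$. A surface with unit normal $N$ and mean curvature $H$ (average of principal curvatures w.r.t. $N$) is a $W$-translator if $H=\langle N,W\rangle$. $\mathcal N$-invariant surfaces: parametrized as $(s,t)\mapsto(t,y(s),\theta(s))$; $N=\frac{y'}{\sqrt2\Phi}(e_1-e_3)+\frac{\sqrt2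 y\theta'}{\Phi}e_2$, $H=\frac{\sqrt2 y^2}{\Phi^3}(\theta'y''-y'\theta''+2y\theta'^3)$, $\Phi=\sqrt{y'^2+2y^2\theta'^2}$. $\mathcal A$-invariant surfaces: parametrized as $(s,t)\mapsto(x(s),t,\theta(s))$, $t>0$; $N=\frac1\Phi(-(x'+2t\theta')e_1+x'e_3)$, $H=\frac{2t^2}{\Phi^3}(x'\theta''-\theta'x'')$, $\Phi=\sqrt{(x'+2t\theta')^2+x'^2}$. Rotational surfaces: parametrized as $(s,t)\mapsto(x(s),y(s),t)$; when $x'=2y\cos\varphi$, $y'=2y\sin\varphi$, $N=-\sin\varphi\,e_1+\cos\varphi\,e_2$ and $H=\frac{\varphi'}{2}+\cos\varphi$. $\Sigma_{\theta_0}=\{\theta=\theta_0\}$ for a constant $\theta_0$. *)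

theory Defs
  imports "HOL-Analysis.Analysis"
begin

text \<open>Tangent vectors are represented by their components (a1,a2,a3) with respect to the
  orthonormal frame e1, e2, e3 of the given left-invariant metric on SL(2,R).
  Since the frame is orthonormal, the metric is the Euclidean dot product of components.\<close>

type_synonym frame_vec = "real \<times> real \<times> real"

definition frame_inner :: "frame_vec \<Rightarrow> frame_vec \<Rightarrow> real" where
  "frame_inner u v = fst u * fst v + fst (snd u) * fst (snd v) + snd (snd u) * snd (snd v)"

text \<open>The field W = (1/2)(x^2-y^2) d/dx + x y d/dy at the point with coordinates (x,y,theta),
  written in the frame: W = (1/(2y)) ((1/2)(x^2-y^2) e1 + x y e2 + (1/2)(x^2-y^2) e3).\<close>

definition W_frame :: "real \<Rightarrow> real \<Rightarrow> frame_vec" where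
  "W_frame x y = ((x\<^sup>2 - y\<^sup>2) / 2 / (2 * y), x * y / (2 * y), (x\<^sup>2 - y\<^sup>2) / 2 / (2 * y))"

subsection \<open>N-invariant surfaces (s,t) \<mapsto> (t, y(s), theta(s))\<close>

definition Phi_N :: "real \<Rightarrow> real \<Rightarrow> real \<Rightarrow> real" where
  "Phi_N y dy dth = sqrt (dy\<^sup>2 + 2 * y\<^sup>2 * dth\<^sup>2)"

definition normal_N :: "real \<Rightarrow> real \<Rightarrow> real \<Rightarrow> frame_vec" where
  "normal_N y dy dth =
     (let P = Phi_N y dy dth in
       (dy / (sqrt 2 * P), sqrt 2 * y * dth / P, - dy / (sqrt 2 * P)))"

definition H_N :: "real \<Rightarrow> real \<Rightarrow> real \<Rightarrow> real \<Rightarrow> real \<Rightarrow> real" where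
  "H_N y dy ddy dth ddth =
     (let P = Phi_N y dy dth in
       sqrt 2 * y\<^sup>2 / P ^ 3 * (dth * ddy - dy * ddth + 2 * y * dth ^ 3))"

definition N_inv_W_translator ::
  "real set \<Rightarrow> (real \<Rightarrow> real) \<Rightarrow> (real \<Rightarrow> real) \<Rightarrow> (real \<Rightarrow> real)
     \<Rightarrow> (real \<Rightarrow> real) \<Rightarrow> (real \<Rightarrow> real) \<Rightarrow> bool" where
  "N_inv_W_translator I y y1 y2 th1 th2 \<longleftrightarrow>
     (\<forall>s\<in>I. \<forall>t::real.
        H_N (y s) (y1 s) (y2 s) (th1 s) (th2 s)
          = frame_inner (normal_N (y s) (y1 s) (th1 s)) (W_frame t (y s)))"

subsection \<open>A-invariant surfaces (s,t) \<mapsto> (x(s), t, theta(s)), t > 0\<close>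

definition Phi_A :: "real \<Rightarrow> real \<Rightarrow> real \<Rightarrow> real" where
  "Phi_A t dx dth = sqrt ((dx + 2 * t * dth)\<^sup>2 + dx\<^sup>2)"

definition normal_A :: "real \<Rightarrow> real \<Rightarrow> real \<Rightarrow> frame_vec" where
  "normal_A t dx dth =
     (let P = Phi_A t dx dth in
       (- (dx + 2 * t * dth) / P, 0, dx / P))"

definition H_A :: "real \<Rightarrow> real \<Rightarrow> real \<Rightarrow> real \<Rightarrow> real \<Rightarrow> real" where
  "H_A t dx ddx dth ddth =
     (let P = Phi_A t dx dth in
       2 * t\<^sup>2 / P ^ 3 * (dx * ddth - dth * ddx))"

definition A_inv_W_translator ::
  "real set \<Rightarrow> (real \<Rightarrow> real) \<Rightarrow> (real \<Rightarrow> real) \<Rightarrow> (real \<Rightarrow> real)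
     \<Rightarrow> (real \<Rightarrow> real) \<Rightarrow> (real \<Rightarrow> real) \<Rightarrow> bool" where
  "A_inv_W_translator I x x1 x2 th1 th2 \<longleftrightarrow>
     (\<forall>s\<in>I. \<forall>t::real. t > 0 \<longrightarrow>
        H_A t (x1 s) (x2 s) (th1 s) (th2 s)
          = frame_inner (normal_A t (x1 s) (th1 s)) (W_frame (x s) t))"

subsection \<open>Rotational surfaces (s,t) \<mapsto> (x(s), y(s), t) with x' = 2y cos phi, y' = 2y sin phi\<close>

definition normal_rot :: "real \<Rightarrow> frame_vec" where
  "normal_rot ph = (- sin ph, cos ph, 0)"

definition H_rot :: "real \<Rightarrow> real \<Rightarrow> real" where
  "H_rot ph dph = dph / 2 + cos ph"

definition rot_W_translator ::
  "real set \<Rightarrow> (real \<Rightarrow> real) \<Rightarrow> (real \<Rightarrow> real) \<Rightarrow> (real \<Rightarrow> real) \<Rightarrow> (real \<Rightarrow> real) \<Rightarrow> bool" where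
  "rot_W_translator I x y ph ph1 \<longleftrightarrow>
     (\<forall>s\<in>I. H_rot (ph s) (ph1 s) = frame_inner (normal_rot (ph s)) (W_frame (x s) (y s)))"

end

theory Submission
  imports Defs
begin

lemma const_deriv_zero:
  fixes f :: "real \<Rightarrow> real"
  assumes "open I" "s \<in> I" "\<forall>u\<in>I. f u = c" "(f has_real_derivative d) (at s)"
  shows "d = 0"
proof -
  have "((\<lambda>_. c) has_real_derivative d) (at s)"
    using has_field_derivative_transform_within_open[OF assms(4) assms(1) assms(2)] assms(3) by auto
  moreover have "((\<lambda>_. c) has_real_derivative 0) (at s)" by simp
  ultimately show ?thesis using DERIV_unique by blast
qed

lemma zero_deriv_const:
  fixes f :: "real \<Rightarrow> real"
  assumes "open I" "connected I" "\<forall>s\<in>I. (f has_real_derivative f' s) (at s)" "\<forall>s\<in>I. f' s = 0"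
  shows "\<exists>c. \<forall>s\<in>I. f s = c"
proof -
  have "continuous_on I f"
    using assms(3) by (meson DERIV_isCont continuous_at_imp_continuous_on)
  moreover have "\<forall>x\<in>I - {}. DERIV f x :> 0" using assms(3,4) by auto
  ultimately obtain c where "\<And>x. x \<in> I \<Longrightarrow> f x = c"
    using DERIV_zero_connected_constant[OF assms(2) assms(1), of "{}" f] by auto
  then show ?thesis by blast
qed

lemma N_key:
  fixes y dy ddy c ddth :: real
  assumes "y > 0" "dy \<noteq> 0 \<or> c \<noteq> 0"
    and "\<forall>t::real. H_N y dy ddy c ddth = frame_inner (normal_N y dy c) (W_frame t y)"
  shows "c = 0"
proof -
  define P where "P = Phi_N y dy c"
  have "dy\<^sup>2 + 2 * y\<^sup>2 * c\<^sup>2 > 0"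
  proof (cases "dy = 0")
    case True
    then show ?thesis using assms(1,2) by simp
  next
    case False
    then show ?thesis by (simp add: add_pos_nonneg)
  qed
  hence P: "P > 0" unfolding P_def Phi_N_def by simp
  have e: "frame_inner (normal_N y dy c) (W_frame t y) = sqrt 2 * y * c * t / (2 * P)" for t
    using assms(1) P unfolding frame_inner_def normal_N_def W_frame_def P_def[symmetric] Let_def
    by (simp add: field_simps)
  have "sqrt 2 * y * c * 0 / (2 * P) = sqrt 2 * y * c * 1 / (2 * P)"
    using assms(3) e by metis
  hence "sqrt 2 * y * c = 0" using P by simp
  thus ?thesis using assms(1) by simp
qed

lemma A_key:
  fixes x d ddx c ddth :: real
  assumes "d \<noteq> 0 \<or> c \<noteq> 0"
    and "\<forall>t::real. t > 0 \<longrightarrow> H_A t d ddx c ddth = frame_inner (normal_A t d c) (W_frame x t)"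
  shows "c = 0"
proof -
  define K where "K = d * ddth - c * ddx"
  have f: "4 * t\<^sup>2 * K = - c * (x\<^sup>2 - t\<^sup>2) * ((d + 2 * t * c)\<^sup>2 + d\<^sup>2)" if t: "t > 0" for t :: real
  proof -
    define P where "P = Phi_A t d c"
    have "(d + 2 * t * c)\<^sup>2 + d\<^sup>2 > 0"
    proof (cases "d = 0")
      case True
      then have "c \<noteq> 0" using assms(1) by simp
      then show ?thesis using True t by simp
    next
      case False
      then show ?thesis by (simp add: add_nonneg_pos)
    qed
    hence P: "P > 0" and P2: "P\<^sup>2 = (d + 2 * t * c)\<^sup>2 + d\<^sup>2" unfolding P_def Phi_A_def by simp_all
    have "H_A t d ddx c ddth = 2 * t\<^sup>2 / P ^ 3 * K"
      unfolding H_A_def K_def P_def Let_def by simp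
    moreover have "frame_inner (normal_A t d c) (W_frame x t) = - c * (x\<^sup>2 - t\<^sup>2) / (2 * P)"
      using t P unfolding frame_inner_def normal_A_def W_frame_def P_def[symmetric] Let_def
      by (simp add: field_simps)
    ultimately have "2 * t\<^sup>2 / P ^ 3 * K = - c * (x\<^sup>2 - t\<^sup>2) / (2 * P)" using assms(2) t by metis
    hence "4 * t\<^sup>2 * K = - c * (x\<^sup>2 - t\<^sup>2) * P\<^sup>2" using P
      by (simp add: field_simps power2_eq_square power3_eq_cube)
    thus ?thesis using P2 by simp
  qed
  have f1: "4 * 1\<^sup>2 * K = - c * (x\<^sup>2 - 1\<^sup>2) * ((d + 2 * 1 * c)\<^sup>2 + d\<^sup>2)" using f[of 1] by simp
  have f2: "4 * 2\<^sup>2 * K = - c * (x\<^sup>2 - 2\<^sup>2) * ((d + 2 * 2 * c)\<^sup>2 + d\<^sup>2)" using f[of 2] by simp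
  have f3: "4 * 3\<^sup>2 * K = - c * (x\<^sup>2 - 3\<^sup>2) * ((d + 2 * 3 * c)\<^sup>2 + d\<^sup>2)" using f[of 3] by simp
  have f4: "4 * 4\<^sup>2 * K = - c * (x\<^sup>2 - 4\<^sup>2) * ((d + 2 * 4 * c)\<^sup>2 + d\<^sup>2)" using f[of 4] by simp
  have f5: "4 * 5\<^sup>2 * K = - c * (x\<^sup>2 - 5\<^sup>2) * ((d + 2 * 5 * c)\<^sup>2 + d\<^sup>2)" using f[of 5] by simp
  define g where "g t = 4 * t\<^sup>2 * K + c * (x\<^sup>2 - t\<^sup>2) * ((d + 2 * t * c)\<^sup>2 + d\<^sup>2)" for t :: real
  have gid: "g 1 - 4 * g 2 + 6 * g 3 - 4 * g 4 + g 5 = - 96 * c ^ 3"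
    unfolding g_def by (simp add: algebra_simps power2_eq_square power3_eq_cube)
  have "g 1 = 0" "g 2 = 0" "g 3 = 0" "g 4 = 0" "g 5 = 0"
    using f1 f2 f3 f4 f5 unfolding g_def by simp_all
  hence "c ^ 3 = 0" using gid by simp
  thus ?thesis by simp
qed

theorem mainTheorem5:
  shows
  "(\<forall>(I::real set) y y1 y2 th th1 th2.
      open I \<and> connected I \<and>
      (\<forall>s\<in>I. y s > 0 \<and> (y1 s \<noteq> 0 \<or> th1 s \<noteq> 0) \<and>
         (y has_real_derivative y1 s) (at s) \<and> (y1 has_real_derivative y2 s) (at s) \<and>
         (th has_real_derivative th1 s) (at s) \<and> (th1 has_real_derivative th2 s) (at s))
      \<longrightarrow> (N_inv_W_translator I y y1 y2 th1 th2 \<longleftrightarrow> (\<exists>th0. \<forall>s\<in>I. th s = th0)))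
   \<and>
   (\<forall>(I::real set) x x1 x2 th th1 th2.
      open I \<and> connected I \<and>
      (\<forall>s\<in>I. (x1 s \<noteq> 0 \<or> th1 s \<noteq> 0) \<and>
         (x has_real_derivative x1 s) (at s) \<and> (x1 has_real_derivative x2 s) (at s) \<and>
         (th has_real_derivative th1 s) (at s) \<and> (th1 has_real_derivative th2 s) (at s))
      \<longrightarrow> (A_inv_W_translator I x x1 x2 th1 th2 \<longleftrightarrow> (\<exists>th0. \<forall>s\<in>I. th s = th0)))
   \<and>
   (\<forall>(I::real set) x y ph ph1.
      open I \<and>
      (\<forall>s\<in>I. y s > 0 \<and>
         (x has_real_derivative 2 * y s * cos (ph s)) (at s) \<and>
         (y has_real_derivative 2 * y s * sin (ph s)) (at s) \<and>
         (ph has_real_derivative ph1 s) (at s))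
      \<longrightarrow> rot_W_translator I x y ph ph1
      \<longrightarrow> (\<forall>s\<in>I. ph1 s = (x s - 2) * cos (ph s) - 1 / (2 * y s) * ((x s)\<^sup>2 - (y s)\<^sup>2) * sin (ph s)))"
proof (intro conjI allI impI)
  fix I :: "real set" and y y1 y2 th th1 th2
  assume A: "open I \<and> connected I \<and>
      (\<forall>s\<in>I. y s > 0 \<and> (y1 s \<noteq> 0 \<or> th1 s \<noteq> 0) \<and>
         (y has_real_derivative y1 s) (at s) \<and> (y1 has_real_derivative y2 s) (at s) \<and>
         (th has_real_derivative th1 s) (at s) \<and> (th1 has_real_derivative th2 s) (at s))"
  show "N_inv_W_translator I y y1 y2 th1 th2 \<longleftrightarrow> (\<exists>th0. \<forall>s\<in>I. th s = th0)"
  proof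
    assume T: "N_inv_W_translator I y y1 y2 th1 th2"
    have "\<forall>s\<in>I. th1 s = 0"
      using T A N_key unfolding N_inv_W_translator_def by blast
    then show "\<exists>th0. \<forall>s\<in>I. th s = th0" using zero_deriv_const[of I th th1] A by blast
  next
    assume "\<exists>th0. \<forall>s\<in>I. th s = th0"
    then obtain c where c: "\<forall>s\<in>I. th s = c" by blast
    have z1: "\<forall>s\<in>I. th1 s = 0" using const_deriv_zero[OF _ _ c] A by blast
    have z2: "\<forall>s\<in>I. th2 s = 0" using const_deriv_zero[OF _ _ z1] A by blast
    show "N_inv_W_translator I y y1 y2 th1 th2"
      unfolding N_inv_W_translator_def H_N_def frame_inner_def normal_N_def W_frame_def Let_def
      using z1 z2 by simp
  qed
next
  fix I :: "real set" and x x1 x2 th th1 th2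
  assume A: "open I \<and> connected I \<and>
      (\<forall>s\<in>I. (x1 s \<noteq> 0 \<or> th1 s \<noteq> 0) \<and>
         (x has_real_derivative x1 s) (at s) \<and> (x1 has_real_derivative x2 s) (at s) \<and>
         (th has_real_derivative th1 s) (at s) \<and> (th1 has_real_derivative th2 s) (at s))"
  show "A_inv_W_translator I x x1 x2 th1 th2 \<longleftrightarrow> (\<exists>th0. \<forall>s\<in>I. th s = th0)"
  proof
    assume T: "A_inv_W_translator I x x1 x2 th1 th2"
    have "\<forall>s\<in>I. th1 s = 0"
    proof
      fix s assume s: "s \<in> I"
      show "th1 s = 0"
        using A_key[of "x1 s" "th1 s" "x2 s" "th2 s" "x s"] T A s
        unfolding A_inv_W_translator_def by blast
    qed
    then show "\<exists>th0. \<forall>s\<in>I. th s = th0" using zero_deriv_const[of I th th1] A by blast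
  next
    assume "\<exists>th0. \<forall>s\<in>I. th s = th0"
    then obtain c where c: "\<forall>s\<in>I. th s = c" by blast
    have z1: "\<forall>s\<in>I. th1 s = 0" using const_deriv_zero[OF _ _ c] A by blast
    have z2: "\<forall>s\<in>I. th2 s = 0" using const_deriv_zero[OF _ _ z1] A by blast
    show "A_inv_W_translator I x x1 x2 th1 th2"
      unfolding A_inv_W_translator_def H_A_def frame_inner_def normal_A_def W_frame_def Let_def
      using z1 z2 by (simp add: field_simps)
  qed
next
  fix I :: "real set" and x y ph ph1
  assume A: "open I \<and>
      (\<forall>s\<in>I. y s > 0 \<and>
         (x has_real_derivative 2 * y s * cos (ph s)) (at s) \<and>
         (y has_real_derivative 2 * y s * sin (ph s)) (at s) \<and>
         (ph has_real_derivative ph1 s) (at s))"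
    and T: "rot_W_translator I x y ph ph1"
  show "\<forall>s\<in>I. ph1 s = (x s - 2) * cos (ph s) - 1 / (2 * y s) * ((x s)\<^sup>2 - (y s)\<^sup>2) * sin (ph s)"
  proof
    fix s assume s: "s \<in> I"
    have y: "y s > 0" using A s by blast
    have "ph1 s / 2 + cos (ph s) = - sin (ph s) * (((x s)\<^sup>2 - (y s)\<^sup>2) / 2 / (2 * y s)) + cos (ph s) * (x s * y s / (2 * y s))"
      using T s unfolding rot_W_translator_def H_rot_def frame_inner_def normal_rot_def W_frame_def by simp
    then show "ph1 s = (x s - 2) * cos (ph s) - 1 / (2 * y s) * ((x s)\<^sup>2 - (y s)\<^sup>2) * sin (ph s)"
      using y by (simp add: field_simps)
  qed
qed

end
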